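(* Let $C$ be a finite normal flag simplicial complex of dimension $d$ with $n$ vertices. Then $C$ satisfies the non-revisiting path property; in particular $\operatorname{diam}(C)\le n-d-1$.
   Context: A simplicial complex is flag if every inclusion-minimal set of vertices that does not form a face has exactly $2$ elements. For a face $\sigma$ of $C$, the star $\mathrm{St}(\sigma,C)$ is the smallest subcomplex of $C$ containing all faces of $C$ that contain $\sigma$. For a pure simplicial $d$-complex $C$, the dual graph (facet-ridge graph) $G^\ast(C)$ has the $d$-faces (facets) of $C$ as vertices, two facets being adjacent if they intersect in a $(d-1)$-face. A pure simplicial complex $C$ is normal if $G^\ast(\mathrm{St}(\sigma,C))$ is connected for every face $\sigma$ of $C$, including the empty face (whose star is $C$). $\operatorname{diam}(C)$ is the diameter of $G^\ast(C)$. A facet path is a map $\Gamma$ from an integer interval $I$ to the set of facets such that consecutive facets $\Gamma(i),\Gamma(i+1)$ intersect in a $(d-1)$-face. A facet path $\Gamma$ is non-revisiting if whenever $\Gamma(i)$ and $\Gamma(j)$ both lie in $\mathrm{St}(v,C)$ for some vertex $v$, then $\Gamma(k)\in\mathrm{St}(v,C)$ for all $k$ between $i$ and $j$. $C$ has the non-revisiting path property if any two facets of $C$ are joined by a non-revisiting facet path. *)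

theory Defs
  imports Main
begin

definition simplicial_complex :: "'a set set \<Rightarrow> bool" where
  "simplicial_complex C \<longleftrightarrow> {} \<in> C \<and> (\<forall>\<sigma>\<in>C. finite \<sigma>) \<and> (\<forall>\<sigma>\<in>C. \<forall>\<tau>. \<tau> \<subseteq> \<sigma> \<longrightarrow> \<tau> \<in> C)"

definition vertices :: "'a set set \<Rightarrow> 'a set" where
  "vertices C = \<Union>C"

definition facets :: "'a set set \<Rightarrow> 'a set set" where
  "facets C = {\<sigma>\<in>C. \<forall>\<tau>\<in>C. \<sigma> \<subseteq> \<tau> \<longrightarrow> \<tau> = \<sigma>}"

definition has_dim :: "'a set set \<Rightarrow> nat \<Rightarrow> bool" where
  "has_dim C d \<longleftrightarrow> (\<exists>\<sigma>\<in>C. card \<sigma> = d + 1) \<and> (\<forall>\<sigma>\<in>C. card \<sigma> \<le> d + 1)"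

definition pure :: "'a set set \<Rightarrow> bool" where
  "pure C \<longleftrightarrow> (\<forall>F\<in>facets C. \<forall>G\<in>facets C. card F = card G)"

definition flag :: "'a set set \<Rightarrow> bool" where
  "flag C \<longleftrightarrow> (\<forall>S. S \<subseteq> vertices C \<and> S \<notin> C \<and> (\<forall>T. T \<subset> S \<longrightarrow> T \<in> C) \<longrightarrow> card S = 2)"

definition St :: "'a set \<Rightarrow> 'a set set \<Rightarrow> 'a set set" where
  "St \<sigma> C = {\<tau>\<in>C. \<exists>\<rho>\<in>C. \<sigma> \<subseteq> \<rho> \<and> \<tau> \<subseteq> \<rho>}"

definition ridge_adj :: "'a set \<Rightarrow> 'a set \<Rightarrow> bool" where
  "ridge_adj F G \<longleftrightarrow> card F = card G \<and> card (F \<inter> G) + 1 = card F"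

text \<open>A facet path in K, represented by the list of its facets
(indices 0..length-1 play the role of the integer interval).\<close>
definition facet_path :: "'a set set \<Rightarrow> 'a set list \<Rightarrow> bool" where
  "facet_path K xs \<longleftrightarrow> xs \<noteq> [] \<and> set xs \<subseteq> facets K \<and>
     (\<forall>i. Suc i < length xs \<longrightarrow> ridge_adj (xs ! i) (xs ! Suc i))"

definition path_between :: "'a set set \<Rightarrow> 'a set list \<Rightarrow> 'a set \<Rightarrow> 'a set \<Rightarrow> bool" where
  "path_between K xs F G \<longleftrightarrow> facet_path K xs \<and> hd xs = F \<and> last xs = G"

definition dual_connected :: "'a set set \<Rightarrow> bool" where
  "dual_connected K \<longleftrightarrow> (\<forall>F\<in>facets K. \<forall>G\<in>facets K. \<exists>xs. path_between K xs F G)"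

text \<open>Normal: pure and the dual graph of every star (including that of the empty face,
which is C itself) is connected.\<close>
definition normal :: "'a set set \<Rightarrow> bool" where
  "normal C \<longleftrightarrow> pure C \<and> (\<forall>\<sigma>\<in>C. dual_connected (St \<sigma> C))"

definition non_revisiting :: "'a set set \<Rightarrow> 'a set list \<Rightarrow> bool" where
  "non_revisiting C xs \<longleftrightarrow> (\<forall>v\<in>vertices C. \<forall>i j k. i \<le> k \<and> k \<le> j \<and> j < length xs \<and>
      xs ! i \<in> St {v} C \<and> xs ! j \<in> St {v} C \<longrightarrow> xs ! k \<in> St {v} C)"

definition non_revisiting_path_property :: "'a set set \<Rightarrow> bool" where
  "non_revisiting_path_property C \<longleftrightarrow>
     (\<forall>F\<in>facets C. \<forall>G\<in>facets C. \<exists>xs. path_between C xs F G \<and> non_revisiting C xs)"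

definition facet_dist :: "'a set set \<Rightarrow> 'a set \<Rightarrow> 'a set \<Rightarrow> nat" where
  "facet_dist C F G = (LEAST k. \<exists>xs. path_between C xs F G \<and> length xs = k + 1)"

definition diam :: "'a set set \<Rightarrow> nat" where
  "diam C = Max {facet_dist C F G | F G. F \<in> facets C \<and> G \<in> facets C}"

end

theory Submission
  imports Defs
begin

locale NF =
  fixes C :: "'a set set" and d :: nat
  assumes sc: "simplicial_complex C" and finC: "finite C"
    and fcard: "\<And>F. F \<in> facets C \<Longrightarrow> card F = Suc d"
    and bound: "\<And>\<sigma>. \<sigma> \<in> C \<Longrightarrow> card \<sigma> \<le> Suc d"
    and norm: "\<And>\<sigma>. \<sigma> \<in> C \<Longrightarrow> dual_connected (St \<sigma> C)"
    and flg: "flag C"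
begin

lemma face_fin: "\<sigma> \<in> C \<Longrightarrow> finite \<sigma>"
  using sc unfolding simplicial_complex_def by blast

lemma face_sub: "\<sigma> \<in> C \<Longrightarrow> \<tau> \<subseteq> \<sigma> \<Longrightarrow> \<tau> \<in> C"
  using sc unfolding simplicial_complex_def by blast

lemma facetD: "F \<in> facets C \<Longrightarrow> F \<in> C"
  unfolding facets_def by blast

lemma facet_max: "F \<in> facets C \<Longrightarrow> \<tau> \<in> C \<Longrightarrow> F \<subseteq> \<tau> \<Longrightarrow> \<tau> = F"
  unfolding facets_def by blast

lemma face_in_facet:
  assumes "\<sigma> \<in> C" shows "\<exists>F\<in>facets C. \<sigma> \<subseteq> F"
proof -
  have "finite {\<tau>\<in>C. \<sigma> \<subseteq> \<tau>}" using finC by simp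
  moreover have "{\<tau>\<in>C. \<sigma> \<subseteq> \<tau>} \<noteq> {}" using assms by blast
  ultimately obtain F where F: "F \<in> {\<tau>\<in>C. \<sigma> \<subseteq> \<tau>}" "\<forall>b\<in>{\<tau>\<in>C. \<sigma> \<subseteq> \<tau>}. F \<le> b \<longrightarrow> F = b"
    using finite_has_maximal[of "{\<tau>\<in>C. \<sigma> \<subseteq> \<tau>}"] by blast
  then have "F \<in> facets C" unfolding facets_def by auto
  then show ?thesis using F by blast
qed

lemma card_facet_face: "\<sigma> \<in> C \<Longrightarrow> card \<sigma> = Suc d \<Longrightarrow> \<sigma> \<in> facets C"
proof -
  assume a: "\<sigma> \<in> C" "card \<sigma> = Suc d"
  { fix \<tau> assume t: "\<tau> \<in> C" "\<sigma> \<subseteq> \<tau>"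
    then have "card \<sigma> \<le> card \<tau>" using face_fin card_mono by blast
    moreover have "card \<tau> \<le> Suc d" using bound t by blast
    ultimately have "\<tau> = \<sigma>" using a t face_fin card_subset_eq by (metis le_antisym) }
  then show ?thesis using a unfolding facets_def by blast
qed

lemma facets_St: assumes "\<alpha> \<in> C" shows "facets (St \<alpha> C) = {F\<in>facets C. \<alpha> \<subseteq> F}"
proof
  show "facets (St \<alpha> C) \<subseteq> {F\<in>facets C. \<alpha> \<subseteq> F}"
  proof
    fix \<tau> assume t: "\<tau> \<in> facets (St \<alpha> C)"
    have tS: "\<tau> \<in> St \<alpha> C" and tmax: "\<And>x. x \<in> St \<alpha> C \<Longrightarrow> \<tau> \<subseteq> x \<Longrightarrow> x = \<tau>"
      using t unfolding facets_def by auto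
    from tS obtain \<rho> where r: "\<rho> \<in> C" "\<alpha> \<subseteq> \<rho>" "\<tau> \<subseteq> \<rho>"
      unfolding St_def by auto
    obtain F where F: "F \<in> facets C" "\<rho> \<subseteq> F" using face_in_facet r(1) by blast
    have FC: "F \<in> C" using F(1) facetD by simp
    have "F \<in> St \<alpha> C" unfolding St_def using FC r F(2) by auto
    moreover have "\<tau> \<subseteq> F" using r F(2) by simp
    ultimately have "F = \<tau>" using tmax by simp
    then show "\<tau> \<in> {F\<in>facets C. \<alpha> \<subseteq> F}" using F r by auto
  qed
next
  show "{F\<in>facets C. \<alpha> \<subseteq> F} \<subseteq> facets (St \<alpha> C)"
  proof
    fix F assume F: "F \<in> {F\<in>facets C. \<alpha> \<subseteq> F}"
    then have FC: "F \<in> C" "\<alpha> \<subseteq> F" "\<And>x. x \<in> C \<Longrightarrow> F \<subseteq> x \<Longrightarrow> x = F"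
      unfolding facets_def by auto
    have "F \<in> St \<alpha> C" unfolding St_def using FC by auto
    moreover have "\<And>x. x \<in> St \<alpha> C \<Longrightarrow> F \<subseteq> x \<Longrightarrow> x = F"
      using FC(3) unfolding St_def by auto
    ultimately show "F \<in> facets (St \<alpha> C)" unfolding facets_def by auto
  qed
qed

definition adj :: "'a \<Rightarrow> 'a \<Rightarrow> bool" where
  "adj u w \<longleftrightarrow> u \<noteq> w \<and> {u,w} \<in> C"

lemma adj_sym: "adj u w \<Longrightarrow> adj w u"
  unfolding adj_def by (auto simp: insert_commute)

lemma adj_in_face: "\<sigma> \<in> C \<Longrightarrow> u \<in> \<sigma> \<Longrightarrow> w \<in> \<sigma> \<Longrightarrow> u \<noteq> w \<Longrightarrow> adj u w"
  unfolding adj_def using face_sub[of \<sigma> "{u,w}"] by simp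

lemma clique_face:
  "finite S \<Longrightarrow> S \<subseteq> vertices C \<Longrightarrow> (\<forall>u\<in>S. \<forall>w\<in>S. u \<noteq> w \<longrightarrow> adj u w) \<Longrightarrow> S \<in> C"
proof (induction "card S" arbitrary: S rule: less_induct)
  case less
  show ?case
  proof (rule ccontr)
    assume n: "S \<notin> C"
    have "\<forall>T. T \<subset> S \<longrightarrow> T \<in> C"
    proof (intro allI impI)
      fix T
      assume TS: "T \<subset> S"
      have fT: "finite T" using TS less.prems(1) finite_subset by auto
      have cT: "card T < card S" using TS less.prems(1) psubset_card_mono by auto
      have vT: "T \<subseteq> vertices C" using TS less.prems(2) by auto
      have aT: "\<forall>u\<in>T. \<forall>w\<in>T. u \<noteq> w \<longrightarrow> adj u w" using TS less.prems(3) by auto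
      show "T \<in> C" using less.hyps[OF cT fT vT aT] .
    qed
    then have "card S = 2" using flg[unfolded flag_def, rule_format, of S] n less.prems(2) by blast
    then obtain u w where uw: "S = {u,w}" "u \<noteq> w" unfolding card_2_iff by blast
    then have "adj u w" using less.prems(3) by simp
    then show False using uw n unfolding adj_def by simp
  qed
qed

end

definition nonrev :: "'a set list \<Rightarrow> bool" where
  "nonrev P \<longleftrightarrow> (\<forall>y i j k. i \<le> j \<longrightarrow> j \<le> k \<longrightarrow> k < length P \<longrightarrow> y \<in> P!i \<longrightarrow> y \<in> P!k \<longrightarrow> y \<in> P!j)"

definition monoW :: "'a set \<Rightarrow> 'a set list \<Rightarrow> bool" where
  "monoW W P \<longleftrightarrow> (\<forall>y\<in>W. \<forall>i j. i \<le> j \<longrightarrow> j < length P \<longrightarrow> y \<in> P!i \<longrightarrow> y \<in> P!j)"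

lemma nonrevD: "nonrev P \<Longrightarrow> i \<le> j \<Longrightarrow> j \<le> k \<Longrightarrow> k < length P \<Longrightarrow> y \<in> P!i \<Longrightarrow> y \<in> P!k \<Longrightarrow> y \<in> P!j"
  unfolding nonrev_def by blast

lemma monoD: "monoW W P \<Longrightarrow> y \<in> W \<Longrightarrow> i \<le> j \<Longrightarrow> j < length P \<Longrightarrow> y \<in> P!i \<Longrightarrow> y \<in> P!j"
  unfolding monoW_def by blast

lemma cat_len: "P2 \<noteq> [] \<Longrightarrow> length P1 = Suc b \<Longrightarrow> length (P1 @ tl P2) = b + length P2"
  by (cases P2) auto

lemma cat_nth1: "i < length P1 \<Longrightarrow> (P1 @ tl P2) ! i = P1 ! i"
  by (simp add: nth_append)

lemma cat_nth2:
  assumes "length P1 = Suc b" "P2 \<noteq> []" "last P1 = hd P2" "b \<le> i" "i < b + length P2"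
  shows "(P1 @ tl P2) ! i = P2 ! (i - b)"
proof (cases "i = b")
  case True
  have "P1 \<noteq> []" using assms(1) by auto
  then have "(P1 @ tl P2) ! i = last P1" using assms(1) True by (simp add: nth_append last_conv_nth)
  also have "\<dots> = P2 ! 0" using assms(2,3) by (simp add: hd_conv_nth)
  finally show ?thesis using True by simp
next
  case False
  then have ge: "length P1 \<le> i" using assms by simp
  then have "(P1 @ tl P2) ! i = tl P2 ! (i - length P1)" by (simp add: nth_append)
  also have "\<dots> = P2 ! Suc (i - length P1)" using assms ge by (cases P2) auto
  also have "Suc (i - length P1) = i - b" using ge assms(1) by simp
  finally show ?thesis .
qed

lemma cat_hd: "P1 \<noteq> [] \<Longrightarrow> hd (P1 @ tl P2) = hd P1" by simp
lemma cat_last: "P1 \<noteq> [] \<Longrightarrow> P2 \<noteq> [] \<Longrightarrow> last P1 = hd P2 \<Longrightarrow> last (P1 @ tl P2) = last P2"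
  by (cases P2) auto

lemma nonrev_cat:
  assumes ne: "P1 \<noteq> []" "P2 \<noteq> []" and lh: "last P1 = hd P2" and n1: "nonrev P1" and n2: "nonrev P2"
    and br: "\<And>y i k. i < length P1 \<Longrightarrow> y \<in> P1!i \<Longrightarrow> k < length P2 \<Longrightarrow> y \<in> P2!k \<Longrightarrow> y \<in> last P1"
  shows "nonrev (P1 @ tl P2)"
  unfolding nonrev_def
proof (intro allI impI)
  obtain b where b: "length P1 = Suc b" using ne by (cases P1) auto
  have len: "length (P1 @ tl P2) = b + length P2" using cat_len[OF ne(2) b] .
  have lastP1: "last P1 = P1 ! b" using ne b by (simp add: last_conv_nth)
  have hdP2: "hd P2 = P2 ! 0" using ne by (simp add: hd_conv_nth)
  have A: "\<And>i. i \<le> b \<Longrightarrow> (P1 @ tl P2) ! i = P1 ! i" using b cat_nth1 by (metis le_imp_less_Suc)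
  have B: "\<And>i. b \<le> i \<Longrightarrow> i < b + length P2 \<Longrightarrow> (P1 @ tl P2) ! i = P2 ! (i - b)"
    using cat_nth2[OF b ne(2) lh] by blast
  fix y i j k assume ij: "i \<le> j" "j \<le> k" "k < length (P1 @ tl P2)" "y \<in> (P1 @ tl P2) ! i" "y \<in> (P1 @ tl P2) ! k"
  show "y \<in> (P1 @ tl P2) ! j"
  proof (cases "j \<le> b")
    case True
    have yi: "y \<in> P1 ! i" using A ij True by (metis le_trans)
    have "\<exists>k'. k' < length P1 \<and> j \<le> k' \<and> y \<in> P1 ! k'"
    proof (cases "k \<le> b")
      case True
      then have "y \<in> P1 ! k" using A ij by metis
      then show ?thesis using True b ij by (intro exI[of _ k]) simp
    next
      case False
      then have "y \<in> P2 ! (k - b)" "k - b < length P2" using B ij len by auto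
      then have "y \<in> last P1" using br[of i y "k - b"] yi ij True b by simp
      then show ?thesis using lastP1 b True by (intro exI[of _ b]) simp
    qed
    then obtain k' where k': "k' < length P1" "j \<le> k'" "y \<in> P1 ! k'" by blast
    then have "y \<in> P1 ! j" using nonrevD[OF n1, of i j k' y] yi ij by simp
    then show ?thesis using A True by simp
  next
    case False
    have kB: "y \<in> P2 ! (k - b)" "k - b < length P2" using B ij len False by auto
    have yi: "y \<in> P2 ! (i - b)"
    proof (cases "b \<le> i")
      case True
      then show ?thesis using B ij len by auto
    next
      case False
      then have "y \<in> P1 ! i" "i < length P1" using A ij b by auto
      then have "y \<in> last P1" using br kB by blast
      then show ?thesis using False lh hdP2 by simp
    qed
    have "y \<in> P2 ! (j - b)" using nonrevD[OF n2, of "i - b" "j - b" "k - b" y] yi kB ij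
      by (simp add: diff_le_mono)
    then show ?thesis using B False ij len by auto
  qed
qed

lemma mono_cat:
  assumes ne: "P1 \<noteq> []" "P2 \<noteq> []" and lh: "last P1 = hd P2" and m1: "monoW W P1" and m2: "monoW W P2"
  shows "monoW W (P1 @ tl P2)"
  unfolding monoW_def
proof (intro ballI allI impI)
  obtain b where b: "length P1 = Suc b" using ne by (cases P1) auto
  have len: "length (P1 @ tl P2) = b + length P2" using cat_len[OF ne(2) b] .
  have lastP1: "last P1 = P1 ! b" using ne b by (simp add: last_conv_nth)
  have hdP2: "hd P2 = P2 ! 0" using ne by (simp add: hd_conv_nth)
  have A: "\<And>i. i \<le> b \<Longrightarrow> (P1 @ tl P2) ! i = P1 ! i" using b cat_nth1 by (metis le_imp_less_Suc)
  have B: "\<And>i. b \<le> i \<Longrightarrow> i < b + length P2 \<Longrightarrow> (P1 @ tl P2) ! i = P2 ! (i - b)"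
    using cat_nth2[OF b ne(2) lh] by blast
  fix y i j assume y: "y \<in> W" and ij: "i \<le> j" "j < length (P1 @ tl P2)" "y \<in> (P1 @ tl P2) ! i"
  show "y \<in> (P1 @ tl P2) ! j"
  proof (cases "j \<le> b")
    case True
    then have "y \<in> P1 ! i" using A ij by (metis le_trans)
    then have "y \<in> P1 ! j" using monoD[OF m1 y, of i j] ij True b by simp
    then show ?thesis using A True by simp
  next
    case False
    have yi: "y \<in> P2 ! (i - b)"
    proof (cases "b \<le> i")
      case True
      then show ?thesis using B ij len by auto
    next
      case False
      then have "y \<in> P1 ! i" using A ij by auto
      then have "y \<in> P1 ! b" using monoD[OF m1 y, of i b] False b by simp
      then show ?thesis using False lh hdP2 lastP1 by simp
    qed
    then have "y \<in> P2 ! (j - b)" using monoD[OF m2 y, of "i - b" "j - b"] ij len False by (simp add: diff_le_mono)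
    then show ?thesis using B False ij len by auto
  qed
qed


context NF begin

definition spath :: "'a set \<Rightarrow> 'a set list \<Rightarrow> bool" where
  "spath \<alpha> P \<longleftrightarrow> P \<noteq> [] \<and> (\<forall>H\<in>set P. H \<in> facets C \<and> \<alpha> \<subseteq> H) \<and>
     (\<forall>i. Suc i < length P \<longrightarrow> ridge_adj (P!i) (P!Suc i))"

lemma spath_cat:
  assumes s1: "spath \<alpha> P1" and s2: "spath \<alpha> P2" and lh: "last P1 = hd P2"
  shows "spath \<alpha> (P1 @ tl P2)"
proof -
  have ne: "P1 \<noteq> []" "P2 \<noteq> []" using s1 s2 unfolding spath_def by auto
  obtain b where b: "length P1 = Suc b" using ne by (cases P1) auto
  have len: "length (P1 @ tl P2) = b + length P2" using cat_len[OF ne(2) b] .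
  have A: "\<And>i. i \<le> b \<Longrightarrow> (P1 @ tl P2) ! i = P1 ! i" using b cat_nth1 by (metis le_imp_less_Suc)
  have B: "\<And>i. b \<le> i \<Longrightarrow> i < b + length P2 \<Longrightarrow> (P1 @ tl P2) ! i = P2 ! (i - b)"
    using cat_nth2[OF b ne(2) lh] by blast
  have r1: "\<And>i. Suc i < length P1 \<Longrightarrow> ridge_adj (P1!i) (P1!Suc i)" using s1 unfolding spath_def by blast
  have r2: "\<And>i. Suc i < length P2 \<Longrightarrow> ridge_adj (P2!i) (P2!Suc i)" using s2 unfolding spath_def by blast
  have "\<forall>H\<in>set (P1 @ tl P2). H \<in> facets C \<and> \<alpha> \<subseteq> H"
    using s1 s2 unfolding spath_def by (auto dest: list.set_sel(2))
  moreover have "\<forall>i. Suc i < length (P1 @ tl P2) \<longrightarrow> ridge_adj ((P1 @ tl P2)!i) ((P1 @ tl P2)!Suc i)"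
  proof (intro allI impI)
    fix i assume i: "Suc i < length (P1 @ tl P2)"
    show "ridge_adj ((P1 @ tl P2)!i) ((P1 @ tl P2)!Suc i)"
    proof (cases "Suc i \<le> b")
      case True
      then show ?thesis using A r1[of i] b by simp
    next
      case False
      then have "b \<le> i" by simp
      moreover have "Suc (i - b) = Suc i - b" using False by simp
      ultimately show ?thesis using B[of i] B[of "Suc i"] r2[of "i - b"] i len by simp
    qed
  qed
  ultimately show ?thesis using ne unfolding spath_def by auto
qed

definition Vx :: "'a set \<Rightarrow> 'a set" where
  "Vx \<alpha> = {w. w \<notin> \<alpha> \<and> insert w \<alpha> \<in> C}"

fun reach :: "'a set \<Rightarrow> 'a set \<Rightarrow> nat \<Rightarrow> 'a set" where
  "reach V X 0 = X"
| "reach V X (Suc k) = reach V X k \<union> {w\<in>V. \<exists>u\<in>reach V X k. adj u w}"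

definition lev :: "'a set \<Rightarrow> 'a set \<Rightarrow> 'a \<Rightarrow> nat" where
  "lev V X w = (LEAST k. w \<in> reach V X k)"

lemma reach_sub: "X \<subseteq> V \<Longrightarrow> reach V X k \<subseteq> V"
  by (induction k) auto

lemma reach_mono: "k \<le> k' \<Longrightarrow> reach V X k \<subseteq> reach V X k'"
  by (rule lift_Suc_mono_le[of "reach V X"]) auto

lemma lev_reach: "w \<in> reach V X k \<Longrightarrow> w \<in> reach V X (lev V X w) \<and> lev V X w \<le> k"
  unfolding lev_def by (meson LeastI Least_le)

lemma lev0: "w \<in> reach V X k \<Longrightarrow> (lev V X w = 0 \<longleftrightarrow> w \<in> X)"
  by (metis bot_nat_0.extremum_unique lev_reach reach.simps(1))

lemma lev_adj:
  assumes "w \<in> V" "u \<in> reach V X k" "adj u w"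
  shows "w \<in> reach V X (Suc (lev V X u)) \<and> lev V X w \<le> Suc (lev V X u)"
proof -
  have "w \<in> reach V X (Suc (lev V X u))" using assms lev_reach[OF assms(2)] by auto
  then show ?thesis using lev_reach by blast
qed

lemma lev_Suc:
  assumes "w \<in> reach V X k" "lev V X w = Suc m"
  shows "\<exists>u. u \<in> reach V X m \<and> lev V X u = m \<and> adj u w"
proof -
  have w1: "w \<in> reach V X (Suc m)" using lev_reach[OF assms(1)] assms by simp
  have w2: "w \<notin> reach V X m" using lev_reach[of w V X m] assms by auto
  obtain u where u: "u \<in> reach V X m" "adj u w" "w \<in> V" using w1 w2 by auto
  have "lev V X u \<le> m" using lev_reach[OF u(1)] by simp
  moreover have "lev V X w \<le> Suc (lev V X u)" using lev_adj[OF u(3) u(1) u(2)] by simp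
  ultimately show ?thesis using u assms by auto
qed

lemma Vx_sub_facet: "H \<in> C \<Longrightarrow> \<alpha> \<subseteq> H \<Longrightarrow> w \<in> H - \<alpha> \<Longrightarrow> w \<in> Vx \<alpha>"
  unfolding Vx_def using face_sub by auto

lemma reach_all:
  assumes a: "\<alpha> \<in> C" and cd: "card \<alpha> + 2 \<le> Suc d" and X: "X \<subseteq> Vx \<alpha>" "x \<in> X" and w: "w \<in> Vx \<alpha>"
  shows "\<exists>k. w \<in> reach (Vx \<alpha>) X k"
proof -
  define R where "R = {w. \<exists>k. w \<in> reach (Vx \<alpha>) X k}"
  have facetR: "H - \<alpha> \<subseteq> R" if H: "H \<in> facets C" "\<alpha> \<subseteq> H" "u \<in> H - \<alpha>" "u \<in> R" for H u
  proof
    fix v assume v: "v \<in> H - \<alpha>"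
    have vV: "v \<in> Vx \<alpha>" using Vx_sub_facet H v facetD by blast
    obtain k where k: "u \<in> reach (Vx \<alpha>) X k" using H R_def by blast
    show "v \<in> R"
    proof (cases "u = v")
      case True then show ?thesis using H by simp
    next
      case False
      then have "adj u v" using adj_in_face facetD H v by blast
      then show ?thesis using lev_adj[OF vV k] R_def by blast
    qed
  qed
  obtain F0 where F0: "F0 \<in> facets C" "insert x \<alpha> \<subseteq> F0" using face_in_facet X unfolding Vx_def by blast
  obtain Fw where Fw: "Fw \<in> facets C" "insert w \<alpha> \<subseteq> Fw" using face_in_facet w unfolding Vx_def by blast
  have fS: "facets (St \<alpha> C) = {F\<in>facets C. \<alpha> \<subseteq> F}" using facets_St a by simp
  have "F0 \<in> facets (St \<alpha> C)" "Fw \<in> facets (St \<alpha> C)" using fS F0 Fw by auto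
  then obtain xs where xs: "path_between (St \<alpha> C) xs F0 Fw"
    using norm[OF a, unfolded dual_connected_def] by blast
  have xsf: "xs \<noteq> []" "set xs \<subseteq> {F\<in>facets C. \<alpha> \<subseteq> F}" "\<forall>i. Suc i < length xs \<longrightarrow> ridge_adj (xs ! i) (xs ! Suc i)"
    "hd xs = F0" "last xs = Fw"
    using xs fS unfolding path_between_def facet_path_def by auto
  have xsm: "\<And>i. i < length xs \<Longrightarrow> xs!i \<in> facets C \<and> \<alpha> \<subseteq> xs!i"
    using xsf(2) nth_mem by blast
  have step: "\<forall>i. i < length xs \<longrightarrow> xs!i - \<alpha> \<subseteq> R"
  proof (intro allI)
    fix i show "i < length xs \<longrightarrow> xs!i - \<alpha> \<subseteq> R"
    proof (induction i)
      case 0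
      have "x \<in> R" unfolding R_def using X by (metis mem_Collect_eq reach.simps(1))
      moreover have "x \<in> xs!0 - \<alpha>" using xsf F0 X unfolding Vx_def by (auto simp: hd_conv_nth)
      moreover have "xs!0 \<in> facets C" "\<alpha> \<subseteq> xs!0" using xsm[of 0] xsf(1) by auto
      ultimately show ?case using facetR by blast
    next
      case (Suc i)
      show ?case
      proof
        assume i: "Suc i < length xs"
        have Hi: "xs!i \<in> facets C" "\<alpha> \<subseteq> xs!i" "xs!Suc i \<in> facets C" "\<alpha> \<subseteq> xs!Suc i"
          using xsm[of i] xsm[of "Suc i"] i by auto
        have ra: "ridge_adj (xs!i) (xs!Suc i)" using xsf i by blast
        have "card (xs!i \<inter> xs!Suc i) = d" using ra fcard Hi unfolding ridge_adj_def by simp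
        moreover have "card \<alpha> < d" using cd by simp
        ultimately have "\<not> (xs!i \<inter> xs!Suc i \<subseteq> \<alpha>)"
          using card_mono face_fin a by (metis not_le)
        then obtain u where u: "u \<in> xs!i" "u \<in> xs!Suc i" "u \<notin> \<alpha>" by blast
        have "u \<in> R" using Suc.IH i u by auto
        then show "xs!Suc i - \<alpha> \<subseteq> R" using facetR Hi u by blast
      qed
    qed
  qed
  have "w \<in> last xs - \<alpha>" using xsf Fw w unfolding Vx_def by auto
  then have "w \<in> R" using step xsf by (metis last_conv_nth diff_less length_greater_0_conv less_one subsetD)
  then show ?thesis unfolding R_def by blast
qed

end

context NF begin

definition Nb :: "'a set \<Rightarrow> 'a set" where
  "Nb T = T \<union> {y. \<exists>t\<in>T. adj y t}"

definition goodL :: "'a set \<Rightarrow> 'a set \<Rightarrow> 'a set list \<Rightarrow> bool" where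
  "goodL \<alpha> X P \<longleftrightarrow> spath \<alpha> P \<and> last P \<inter> X \<noteq> {} \<and> (\<forall>i. Suc i < length P \<longrightarrow> P!i \<inter> X = {})
     \<and> nonrev P \<and> monoW (Nb (last P \<inter> X)) P"

lemma spath_mono: "spath \<alpha>' P \<Longrightarrow> \<alpha> \<subseteq> \<alpha>' \<Longrightarrow> spath \<alpha> P"
  unfolding spath_def by blast

lemma spath_nth: "spath \<alpha> P \<Longrightarrow> i < length P \<Longrightarrow> P!i \<in> facets C \<and> \<alpha> \<subseteq> P!i"
  unfolding spath_def using nth_mem by blast

lemma spath_single: "F \<in> facets C \<Longrightarrow> \<alpha> \<subseteq> F \<Longrightarrow> spath \<alpha> [F]"
  unfolding spath_def by simp

lemma nonrev_single: "nonrev [F]"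
  unfolding nonrev_def by simp

lemma mono_single: "monoW W [F]"
  unfolding monoW_def by simp

lemma goodL_first: "goodL \<alpha> X P \<Longrightarrow> Suc i < length P \<Longrightarrow> y \<in> P!i \<Longrightarrow> y \<notin> X"
  unfolding goodL_def by blast

lemma goodL_last_len: "goodL \<alpha> X P \<Longrightarrow> i < length P \<Longrightarrow> y \<in> P!i \<Longrightarrow> y \<in> X \<Longrightarrow> i = length P - 1"
  using goodL_first by (metis Suc_lessI diff_Suc_1)

lemma Vx_card: "\<alpha> \<in> C \<Longrightarrow> w \<in> Vx \<alpha> \<Longrightarrow> Suc (card \<alpha>) \<le> Suc d"
proof -
  assume a: "\<alpha> \<in> C" "w \<in> Vx \<alpha>"
  then have "insert w \<alpha> \<in> C" "w \<notin> \<alpha>" unfolding Vx_def by auto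
  then show ?thesis using bound face_fin a by (metis card_insert_disjoint)
qed


lemma in_vertices: "\<sigma> \<in> C \<Longrightarrow> u \<in> \<sigma> \<Longrightarrow> u \<in> vertices C"
  unfolding vertices_def by blast

lemma nonrev_two: "nonrev [A, B]"
  unfolding nonrev_def
proof (intro allI impI)
  fix y i j k assume a: "i \<le> j" "j \<le> k" "k < length [A, B]" "y \<in> [A, B] ! i" "y \<in> [A, B] ! k"
  then have "j = i \<or> j = k" by auto
  then show "y \<in> [A, B] ! j" using a by auto
qed

lemma X_not_alpha: "X \<subseteq> Vx \<alpha> \<Longrightarrow> y \<in> X \<Longrightarrow> y \<notin> \<alpha>"
  unfolding Vx_def by auto

lemma L_base:
  assumes a: "\<alpha> \<in> C" and cd: "card \<alpha> = d" and X: "X \<subseteq> Vx \<alpha>" "X \<noteq> {}" and F: "F \<in> facets C" "\<alpha> \<subseteq> F"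
  shows "\<exists>P. goodL \<alpha> X P \<and> hd P = F"
proof -
  have FC: "F \<in> C" using F facetD by simp
  have fa: "finite \<alpha>" using a face_fin by simp
  have "card (F - \<alpha>) = 1" using fcard[OF F(1)] cd card_Diff_subset[OF fa F(2)] by simp
  then obtain w where w: "F - \<alpha> = {w}" using card_1_singletonE by blast
  then have Fw: "F = insert w \<alpha>" "w \<notin> \<alpha>" using F(2) by auto
  show ?thesis
  proof (cases "w \<in> X")
    case True
    have "goodL \<alpha> X [F]" unfolding goodL_def
      using spath_single[OF F] nonrev_single mono_single True Fw by auto
    then show ?thesis by (intro exI[of _ "[F]"]) simp
  next
    case False
    obtain x where x: "x \<in> X" using X by blast
    have xV: "x \<notin> \<alpha>" "insert x \<alpha> \<in> C" using x X unfolding Vx_def by auto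
    define G where "G = insert x \<alpha>"
    have xw: "x \<noteq> w" using x False by auto
    have cG: "card G = Suc d" unfolding G_def using xV fa cd by simp
    have GF: "G \<in> facets C" using card_facet_face xV cG unfolding G_def by simp
    have FG: "F \<inter> G = \<alpha>" using Fw xw xV unfolding G_def by auto
    have ra: "ridge_adj F G" unfolding ridge_adj_def using FG cG fcard[OF F(1)] cd by simp
    have sp: "spath \<alpha> [F, G]" unfolding spath_def using F GF ra unfolding G_def by auto
    have FX: "F \<inter> X = {}" using Fw False X_not_alpha[OF X(1)] by auto
    have GX: "G \<inter> X = {x}" using x X_not_alpha[OF X(1)] unfolding G_def by auto
    have wx: "\<not> adj w x"
    proof
      assume adjwx: "adj w x"
      have fin: "finite (insert x F)" using FC face_fin by simp
      have vv: "insert x F \<subseteq> vertices C" using in_vertices FC xV(2) by auto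
      have pw: "\<forall>u\<in>insert x F. \<forall>v\<in>insert x F. u \<noteq> v \<longrightarrow> adj u v"
      proof (intro ballI impI)
        fix u v assume uv: "u \<in> insert x F" "v \<in> insert x F" "u \<noteq> v"
        show "adj u v"
        proof (cases "u = x")
          case True
          then show ?thesis
          proof (cases "v = w")
            case True then show ?thesis using \<open>u = x\<close> adjwx adj_sym by simp
          next
            case False then have "v \<in> \<alpha>" using uv \<open>u = x\<close> Fw by auto
            then show ?thesis using adj_in_face[OF xV(2)] \<open>u = x\<close> uv by auto
          qed
        next
          case False
          then have u: "u \<in> F" using uv by auto
          show ?thesis
          proof (cases "v = x")
            case True
            then show ?thesis
            proof (cases "u = w")
              case True then show ?thesis using \<open>v = x\<close> adjwx by simp
            next
              case False then have "u \<in> \<alpha>" using u Fw by auto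
              then show ?thesis using adj_in_face[OF xV(2)] \<open>v = x\<close> uv by auto
            qed
          next
            case False then have "v \<in> F" using uv by auto
            then show ?thesis using adj_in_face[OF FC] u uv by auto
          qed
        qed
      qed
      have "insert x F \<in> C" using clique_face[OF fin vv pw] .
      moreover have "x \<notin> F" using xw xV(1) Fw by auto
      then have "card (insert x F) = Suc (Suc d)" using fcard[OF F(1)] FC face_fin by simp
      ultimately show False using bound[of "insert x F"] by simp
    qed
    have mo: "monoW (Nb {x}) [F, G]"
      unfolding monoW_def
    proof (intro ballI allI impI)
      fix y i j assume y: "y \<in> Nb {x}" and ij: "i \<le> j" "j < length [F, G]" "y \<in> [F, G] ! i"
      show "y \<in> [F, G] ! j"
      proof (cases "i = j")
        case True then show ?thesis using ij by simp
      next
        case False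
        then have ij2: "i = 0" "j = 1" using ij by auto
        then have yF: "y \<in> F" using ij by simp
        have "y \<in> G"
        proof (cases "y = w")
          case True
          then have "y \<noteq> x" using xw by simp
          then have "adj w x" using y True unfolding Nb_def by auto
          then show ?thesis using wx by simp
        next
          case False then show ?thesis using yF Fw unfolding G_def by auto
        qed
        then show ?thesis using ij2 by simp
      qed
    qed
    have "goodL \<alpha> X [F, G]" unfolding goodL_def
      using sp GX FX nonrev_two mo by auto
    then show ?thesis by (intro exI[of _ "[F, G]"]) simp
  qed
qed

end

context NF begin

lemma Vx_anti: "\<alpha> \<subseteq> \<alpha>' \<Longrightarrow> w \<in> Vx \<alpha>' \<Longrightarrow> w \<in> Vx \<alpha>"
  unfolding Vx_def using face_sub[of "insert w \<alpha>'" "insert w \<alpha>"] by auto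

lemma Nb_mono: "T \<subseteq> T' \<Longrightarrow> Nb T \<subseteq> Nb T'"
  unfolding Nb_def by auto

lemma L_step:
  assumes IH: "\<And>\<alpha>' X' F'. \<alpha>' \<in> C \<Longrightarrow> card \<alpha> < card \<alpha>' \<Longrightarrow> X' \<subseteq> Vx \<alpha>' \<Longrightarrow> X' \<noteq> {} \<Longrightarrow>
          F' \<in> facets C \<Longrightarrow> \<alpha>' \<subseteq> F' \<Longrightarrow> \<exists>P. goodL \<alpha>' X' P \<and> hd P = F'"
    and a: "\<alpha> \<in> C" and cd: "card \<alpha> + 2 \<le> Suc d" and X: "X \<subseteq> Vx \<alpha>" "X \<noteq> {}"
    and F: "F \<in> facets C" "\<alpha> \<subseteq> F"
  shows "\<exists>P. goodL \<alpha> X P \<and> hd P = F"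
proof -
  define V where "V = Vx \<alpha>"
  define lv where "lv = lev V X"
  obtain x0 where x0: "x0 \<in> X" using X by blast
  have XV: "X \<subseteq> V" using X V_def by simp
  have rch: "\<And>w. w \<in> V \<Longrightarrow> \<exists>k. w \<in> reach V X k" using reach_all[OF a cd X(1) x0] V_def by blast
  have lvX: "\<And>w. w \<in> V \<Longrightarrow> lv w = 0 \<longleftrightarrow> w \<in> X"
  proof -
    fix w assume "w \<in> V"
    then obtain k where "w \<in> reach V X k" using rch by blast
    then show "lv w = 0 \<longleftrightarrow> w \<in> X" using lev0 lv_def by simp
  qed
  have lvadj: "\<And>u w. u \<in> V \<Longrightarrow> w \<in> V \<Longrightarrow> adj u w \<Longrightarrow> lv w \<le> Suc (lv u)"
  proof -
    fix u w assume "u \<in> V" "w \<in> V" "adj u w"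
    then obtain k where "u \<in> reach V X k" using rch by blast
    then show "lv w \<le> Suc (lv u)" using lev_adj[OF \<open>w \<in> V\<close> _ \<open>adj u w\<close>] lv_def by blast
  qed
  have lvSuc: "\<And>w m. w \<in> V \<Longrightarrow> lv w = Suc m \<Longrightarrow> \<exists>u\<in>V. lv u = m \<and> adj u w"
  proof -
    fix w m assume "w \<in> V" "lv w = Suc m"
    then obtain k where "w \<in> reach V X k" using rch by blast
    then obtain u where "u \<in> reach V X m" "lev V X u = m" "adj u w"
      using lev_Suc \<open>lv w = Suc m\<close> lv_def by blast
    moreover have "u \<in> V" using reach_sub[OF XV] \<open>u \<in> reach V X m\<close> by blast
    ultimately show "\<exists>u\<in>V. lv u = m \<and> adj u w" using lv_def by blast
  qed
  have VH: "\<And>H y. H \<in> C \<Longrightarrow> \<alpha> \<subseteq> H \<Longrightarrow> y \<in> H \<Longrightarrow> y \<notin> \<alpha> \<Longrightarrow> y \<in> V"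
    using Vx_sub_facet V_def by blast
  define Jp where "Jp m S P \<longleftrightarrow> (\<forall>i<length P. \<forall>y\<in>P!i - \<alpha>. lv y \<le> Suc m \<and>
       (lv y = Suc m \<longrightarrow> (\<exists>t\<in>S-\<alpha>. lv t = m \<and> adj t y)))" for m S P
  have inner: "\<forall>S. S \<in> facets C \<longrightarrow> \<alpha> \<subseteq> S \<longrightarrow> (\<forall>y\<in>S-\<alpha>. m \<le> lv y) \<longrightarrow> (\<exists>y\<in>S-\<alpha>. lv y = m)
      \<longrightarrow> (\<exists>P. goodL \<alpha> X P \<and> hd P = S \<and> Jp m S P)" for m
  proof (induction m)
    case 0
    show ?case
    proof (intro allI impI)
      fix S assume S: "S \<in> facets C" "\<alpha> \<subseteq> S" "\<forall>y\<in>S-\<alpha>. 0 \<le> lv y" "\<exists>y\<in>S-\<alpha>. lv y = 0"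
      have SC: "S \<in> C" using S facetD by simp
      obtain y0 where y0: "y0 \<in> S" "y0 \<notin> \<alpha>" "lv y0 = 0" using S(4) by blast
      have y0V: "y0 \<in> V" using VH SC S(2) y0 by blast
      have y0X: "y0 \<in> X" using lvX y0V y0 by blast
      have g: "goodL \<alpha> X [S]" unfolding goodL_def
        using spath_single[OF S(1,2)] nonrev_single mono_single y0X y0 by auto
      have "Jp 0 S [S]" unfolding Jp_def
      proof (intro allI impI ballI)
        fix i y assume i: "i < length [S]" and y: "y \<in> [S] ! i - \<alpha>"
        then have yS: "y \<in> S" "y \<notin> \<alpha>" by auto
        have yV: "y \<in> V" using VH SC S(2) yS by blast
        show "lv y \<le> Suc 0 \<and> (lv y = Suc 0 \<longrightarrow> (\<exists>t\<in>S - \<alpha>. lv t = 0 \<and> adj t y))"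
        proof (cases "y = y0")
          case True then show ?thesis using y0 by simp
        next
          case False
          then have "adj y0 y" using adj_in_face[OF SC y0(1) yS(1)] by auto
          then show ?thesis using lvadj[OF y0V yV] y0 by auto
        qed
      qed
      then show "\<exists>P. goodL \<alpha> X P \<and> hd P = S \<and> Jp 0 S P" using g by (intro exI[of _ "[S]"]) simp
    qed
  next
    case (Suc m)
    show ?case
    proof (intro allI impI)
      fix S assume S: "S \<in> facets C" "\<alpha> \<subseteq> S" "\<forall>y\<in>S-\<alpha>. Suc m \<le> lv y" "\<exists>y\<in>S-\<alpha>. lv y = Suc m"
      have SC: "S \<in> C" using S facetD by simp
      obtain z where z: "z \<in> S" "z \<notin> \<alpha>" "lv z = Suc m" using S(4) by blast
      have zV: "z \<in> V" using VH[OF SC S(2) z(1) z(2)] .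
      obtain x where x: "x \<in> V" "lv x = m" "adj x z" using lvSuc[OF zV z(3)] by blast
      have xa: "x \<notin> \<alpha>" "insert x \<alpha> \<in> C" using x(1) unfolding V_def Vx_def by auto
      have xS: "x \<notin> S"
      proof
        assume "x \<in> S"
        then have "x \<in> S - \<alpha>" using xa by simp
        then have "Suc m \<le> lv x" using bspec[OF S(3)] by simp
        then show False using x by simp
      qed
      define \<rho> where "\<rho> = {u \<in> S - \<alpha>. adj u x}"
      define \<alpha>' where "\<alpha>' = \<alpha> \<union> \<rho>"
      define X' where "X' = {w \<in> Vx \<alpha>'. lv w = m}"
      have z\<rho>: "z \<in> \<rho>" unfolding \<rho>_def using z x(3) adj_sym by auto
      have \<alpha>'S: "\<alpha>' \<subseteq> S" unfolding \<alpha>'_def \<rho>_def using S(2) by auto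
      have \<alpha>'C: "\<alpha>' \<in> C" using face_sub[OF SC \<alpha>'S] .
      have c\<alpha>: "card \<alpha> < card \<alpha>'"
      proof -
        have "\<alpha> \<subset> \<alpha>'" unfolding \<alpha>'_def using z\<rho> z(2) by auto
        then show ?thesis using psubset_card_mono face_fin[OF \<alpha>'C] by blast
      qed
      have \<rho>lv: "\<And>u. u \<in> \<rho> \<Longrightarrow> Suc m \<le> lv u" using S(3) unfolding \<rho>_def by blast
      have x\<alpha>': "x \<in> Vx \<alpha>'"
      proof -
        have n: "x \<notin> \<alpha>'" unfolding \<alpha>'_def \<rho>_def using xa xS by auto
        have fin: "finite (insert x \<alpha>')" using face_fin[OF \<alpha>'C] by simp
        have vv: "insert x \<alpha>' \<subseteq> vertices C" using in_vertices[OF SC] in_vertices[OF xa(2)] \<alpha>'S by auto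
        have pw: "\<forall>u\<in>insert x \<alpha>'. \<forall>v\<in>insert x \<alpha>'. u \<noteq> v \<longrightarrow> adj u v"
        proof (intro ballI impI)
          fix u v assume uv: "u \<in> insert x \<alpha>'" "v \<in> insert x \<alpha>'" "u \<noteq> v"
          have xw: "\<And>w. w \<in> \<alpha>' \<Longrightarrow> adj x w"
          proof -
            fix w assume w: "w \<in> \<alpha>'"
            show "adj x w"
            proof (cases "w \<in> \<alpha>")
              case True then show ?thesis using adj_in_face[OF xa(2)] xa(1) by auto
            next
              case False then have "w \<in> \<rho>" using w unfolding \<alpha>'_def by auto
              then show ?thesis unfolding \<rho>_def using adj_sym by auto
            qed
          qed
          show "adj u v"
          proof (cases "u = x")
            case True then show ?thesis using uv xw by auto
          next
            case False
            then have u: "u \<in> \<alpha>'" using uv by auto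
            show ?thesis
            proof (cases "v = x")
              case True then show ?thesis using u xw adj_sym by auto
            next
              case False then have "v \<in> \<alpha>'" using uv by auto
              then show ?thesis using adj_in_face[OF SC] u uv \<alpha>'S by auto
            qed
          qed
        qed
        have "insert x \<alpha>' \<in> C" using clique_face[OF fin vv pw] .
        then show ?thesis using n unfolding Vx_def by auto
      qed
      have X'sub: "X' \<subseteq> Vx \<alpha>'" unfolding X'_def by auto
      have X'ne: "X' \<noteq> {}" unfolding X'_def using x\<alpha>' x(2) by auto
      obtain P' where P': "goodL \<alpha>' X' P'" "hd P' = S" using IH[OF \<alpha>'C c\<alpha> X'sub X'ne S(1) \<alpha>'S] by blast
      have sp': "spath \<alpha>' P'" using P' unfolding goodL_def by simp
      have ne': "P' \<noteq> []" using sp' unfolding spath_def by simp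
      have aa': "\<alpha> \<subseteq> \<alpha>'" unfolding \<alpha>'_def by auto
      have Hf: "\<And>i. i < length P' \<Longrightarrow> P'!i \<in> facets C \<and> \<alpha>' \<subseteq> P'!i" using spath_nth[OF sp'] by blast
      have F2: "\<And>i y. i < length P' \<Longrightarrow> y \<in> P'!i \<Longrightarrow> y \<notin> \<alpha> \<Longrightarrow> y \<in> V \<and> (y = z \<or> adj z y)"
      proof -
        fix i y assume iy: "i < length P'" "y \<in> P'!i" "y \<notin> \<alpha>"
        have HC: "P'!i \<in> C" "\<alpha>' \<subseteq> P'!i" using Hf[OF iy(1)] facetD by auto
        have "y \<in> V" using VH[OF HC(1) _ iy(2,3)] HC(2) aa' by blast
        moreover have "z \<in> P'!i" using HC(2) z\<rho> unfolding \<alpha>'_def by auto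
        ultimately show "y \<in> V \<and> (y = z \<or> adj z y)" using adj_in_face[OF HC(1)] iy by blast
      qed
      have F3: "\<And>i y. i < length P' \<Longrightarrow> y \<in> P'!i \<Longrightarrow> y \<notin> \<alpha> \<Longrightarrow> m \<le> lv y \<and> lv y \<le> Suc (Suc m)"
      proof -
        fix i y assume iy: "i < length P'" "y \<in> P'!i" "y \<notin> \<alpha>"
        from F2[OF iy] have yV: "y \<in> V" and yz: "y = z \<or> adj z y" by auto
        show "m \<le> lv y \<and> lv y \<le> Suc (Suc m)"
        proof (cases "y = z")
          case True then show ?thesis using z by simp
        next
          case False
          then have "adj z y" using yz by simp
          then show ?thesis using lvadj[OF zV yV] lvadj[OF yV zV] adj_sym z(3) by fastforce
        qed
      qed
      have F4: "\<And>i y. i < length P' \<Longrightarrow> y \<in> P'!i \<Longrightarrow> y \<notin> \<alpha> \<Longrightarrow> lv y = m \<Longrightarrow> y \<in> X' \<and> i = length P' - 1"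
      proof -
        fix i y assume iy: "i < length P'" "y \<in> P'!i" "y \<notin> \<alpha>" "lv y = m"
        have "y \<notin> \<rho>" using \<rho>lv iy(4) by fastforce
        then have "y \<notin> \<alpha>'" using iy(3) unfolding \<alpha>'_def by simp
        then have "y \<in> Vx \<alpha>'" using Vx_sub_facet[of "P'!i" \<alpha>' y] Hf[OF iy(1)] facetD iy(2) by blast
        then have yX: "y \<in> X'" unfolding X'_def using iy(4) by simp
        then show "y \<in> X' \<and> i = length P' - 1" using goodL_last_len[OF P'(1) iy(1) iy(2)] by simp
      qed
      define S' where "S' = last P'"
      have S'eq: "S' = P'!(length P' - 1)" unfolding S'_def using ne' by (simp add: last_conv_nth)
      have lenP': "length P' - 1 < length P'" using ne' by simp
      have S'f: "S' \<in> facets C" "\<alpha> \<subseteq> S'" using Hf[OF lenP'] S'eq aa' by auto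
      have S'lv: "\<forall>y\<in>S'-\<alpha>. m \<le> lv y" using F3[OF lenP'] S'eq by auto
      have S'ex: "\<exists>y\<in>S'-\<alpha>. lv y = m"
      proof -
        obtain y where y: "y \<in> S'" "y \<in> X'" using P'(1) unfolding goodL_def S'_def by blast
        then have "y \<notin> \<alpha>'" "lv y = m" unfolding X'_def Vx_def by auto
        then show ?thesis using y aa' by blast
      qed
      obtain P where P: "goodL \<alpha> X P" "hd P = S'" "Jp m S' P" using Suc.IH S'f S'lv S'ex by blast
      have spP: "spath \<alpha> P" using P unfolding goodL_def by simp
      have ne: "P \<noteq> []" using spP unfolding spath_def by simp
      have lh: "last P' = hd P" using P S'_def by simp
      define Q where "Q = P' @ tl P"
      obtain b where b: "length P' = Suc b" using ne' by (cases P') auto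
      have len: "length Q = b + length P" unfolding Q_def using cat_len[OF ne b] .
      have QA: "\<And>i. i \<le> b \<Longrightarrow> Q ! i = P' ! i" unfolding Q_def using b cat_nth1 by (metis le_imp_less_Suc)
      have QB: "\<And>i. b \<le> i \<Longrightarrow> i < b + length P \<Longrightarrow> Q ! i = P ! (i - b)"
        unfolding Q_def using cat_nth2[OF b ne lh] by blast
      have spQ: "spath \<alpha> Q" unfolding Q_def using spath_cat[OF spath_mono[OF sp' aa'] spP lh] .
      have hdQ: "hd Q = S" unfolding Q_def using ne' P'(2) by simp
      have lastQ: "last Q = last P" unfolding Q_def using cat_last[OF ne' ne lh] .
      have firstQ: "\<forall>i. Suc i < length Q \<longrightarrow> Q!i \<inter> X = {}"
      proof (intro allI impI)
        fix i assume i: "Suc i < length Q"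
        show "Q!i \<inter> X = {}"
        proof (cases "i < b")
          case True
          show ?thesis
          proof (rule ccontr)
            assume "Q!i \<inter> X \<noteq> {}"
            then obtain y where y: "y \<in> P'!i" "y \<in> X" using QA True by fastforce
            have il: "i < length P'" using True b by simp
            have yna: "y \<notin> \<alpha>" using X_not_alpha[OF X(1) y(2)] .
            have "lv y = 0" using lvX y(2) XV by blast
            then have "lv y = m" using F3[OF il y(1) yna] by simp
            then have "i = length P' - 1" using F4[OF il y(1) yna] by simp
            then show False using True b by simp
          qed
        next
          case False
          then have "Q!i = P!(i - b)" "Suc (i - b) < length P" using QB i len by auto
          then show ?thesis using P(1) unfolding goodL_def by auto
        qed
      qed
      have nonrevQ: "nonrev Q" unfolding Q_def
      proof (rule nonrev_cat[OF ne' ne lh])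
        show "nonrev P'" using P'(1) unfolding goodL_def by simp
        show "nonrev P" using P(1) unfolding goodL_def by simp
      next
        fix y i k assume yi: "i < length P'" "y \<in> P'!i" and yk: "k < length P" "y \<in> P!k"
        show "y \<in> last P'"
        proof (cases "y \<in> \<alpha>")
          case True then show ?thesis using Hf[OF lenP'] S'eq S'_def aa' by auto
        next
          case False
          have mle: "m \<le> lv y" using F3[OF yi False] by simp
          have jp: "lv y \<le> Suc m" "lv y = Suc m \<longrightarrow> (\<exists>t\<in>S'-\<alpha>. lv t = m \<and> adj t y)"
            using P(3) yk False unfolding Jp_def by auto
          show ?thesis
          proof (cases "lv y = m")
            case True
            then have "i = length P' - 1" using F4[OF yi False] by simp
            then show ?thesis using yi S'eq S'_def by simp
          next
            case False
            then have "lv y = Suc m" using mle jp by simp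
            then obtain t where t: "t \<in> S'" "t \<notin> \<alpha>" "lv t = m" "adj t y" using jp by blast
            have "t \<in> X'" using F4[OF lenP' _ t(2) t(3)] t(1) S'eq by simp
            then have yN: "y \<in> Nb (last P' \<inter> X')" unfolding Nb_def using t S'_def adj_sym by blast
            have mP': "monoW (Nb (last P' \<inter> X')) P'" using P'(1) unfolding goodL_def by simp
            have "i \<le> length P' - 1" using yi by simp
            then have "y \<in> P'!(length P' - 1)" using monoD[OF mP' yN _ lenP' yi(2)] by simp
            then show ?thesis using S'eq S'_def by simp
          qed
        qed
      qed
      have monoQ: "monoW (Nb (last Q \<inter> X)) Q"
      proof -
        define W where "W = Nb (last P \<inter> X)"
        have m2: "monoW W P" using P(1) unfolding goodL_def W_def by simp
        have m1: "monoW W P'"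
          unfolding monoW_def
        proof (intro ballI allI impI)
          fix y i j assume y: "y \<in> W" and ij: "i \<le> j" "j < length P'" "y \<in> P'!i"
          have il: "i < length P'" using ij by simp
          show "y \<in> P'!j"
          proof (cases "y \<in> \<alpha>")
            case True then show ?thesis using Hf[OF ij(2)] aa' by auto
          next
            case False
            have yV: "y \<in> V" and mle: "m \<le> lv y" using F2[OF il ij(3) False] F3[OF il ij(3) False] by auto
            have le1: "lv y \<le> Suc 0"
            proof -
              consider "y \<in> last P \<inter> X" | t where "t \<in> last P \<inter> X" "adj y t" using y unfolding W_def Nb_def by blast
              then show ?thesis
              proof cases
                case 1 then have "lv y = 0" using lvX[OF yV] by simp
                then show ?thesis by simp
              next
                case 2
                then have tV: "t \<in> V" using XV by auto
                then have "lv t = 0" using lvX 2 by auto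
                moreover have "adj t y" using 2 adj_sym by blast
                ultimately show ?thesis using lvadj[OF tV yV] by simp
              qed
            qed
            show ?thesis
            proof (cases "lv y = m")
              case True
              then have "i = length P' - 1" using F4[OF il ij(3) False] by simp
              then have "j = i" using ij by simp
              then show ?thesis using ij by simp
            next
              case False
              then have m0: "m = 0" and ly: "lv y = Suc 0" using mle le1 by auto
              obtain w where w: "w \<in> S'" "w \<in> X'" using P'(1) unfolding goodL_def S'_def by blast
              have "w \<in> V" using Vx_anti[OF aa'] w unfolding X'_def V_def by auto
              then have "w \<in> X" using w m0 lvX unfolding X'_def by auto
              have wP0: "w \<in> P!0" using w P(2) ne by (simp add: hd_conv_nth)
              have "\<not> Suc 0 < length P"
              proof
                assume "Suc 0 < length P"
                then have "w \<notin> X" using goodL_first[OF P(1) _ wP0] by simp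
                then show False using \<open>w \<in> X\<close> by simp
              qed
              then have "length P = 1" using ne by (cases P) auto
              then have "last P = S'" using P(2) by (cases P) auto
              then have sub: "last P \<inter> X \<subseteq> last P' \<inter> X'"
              proof (intro subsetI)
                fix u assume u: "u \<in> last P \<inter> X"
                then have "u \<notin> \<alpha>" "lv u = 0" using X_not_alpha[OF X(1)] lvX XV \<open>last P = S'\<close> by auto
                then show "u \<in> last P' \<inter> X'" using F4[OF lenP', of u] u \<open>last P = S'\<close> S'eq S'_def m0 by auto
              qed
              have "y \<in> Nb (last P' \<inter> X')" using Nb_mono[OF sub] y unfolding W_def by (rule subsetD)
              moreover have "monoW (Nb (last P' \<inter> X')) P'" using P'(1) unfolding goodL_def by simp
              ultimately show ?thesis using monoD ij by metis
            qed
          qed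
        qed
        show ?thesis unfolding Q_def using mono_cat[OF ne' ne lh m1 m2] lastQ W_def Q_def by simp
      qed
      have JpQ: "Jp (Suc m) S Q" unfolding Jp_def
      proof (intro allI impI ballI)
        fix i y assume i: "i < length Q" and y: "y \<in> Q!i - \<alpha>"
        show "lv y \<le> Suc (Suc m) \<and> (lv y = Suc (Suc m) \<longrightarrow> (\<exists>t\<in>S-\<alpha>. lv t = Suc m \<and> adj t y))"
        proof (cases "i \<le> b")
          case True
          then have il: "i < length P'" using b by simp
          have yP: "y \<in> P'!i" "y \<notin> \<alpha>" using y QA True by auto
          have lv: "lv y \<le> Suc (Suc m)" using F3[OF il yP] by simp
          have "lv y = Suc (Suc m) \<longrightarrow> adj z y" using F2[OF il yP] z(3) by auto
          then show ?thesis using lv z by auto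
        next
          case False
          then have "Q!i = P!(i - b)" "i - b < length P" using QB i len by auto
          then have "lv y \<le> Suc m" using P(3) y unfolding Jp_def by auto
          then show ?thesis by simp
        qed
      qed
      have "goodL \<alpha> X Q" unfolding goodL_def
        using spQ lastQ P(1) firstQ nonrevQ monoQ unfolding goodL_def by simp
      then show "\<exists>P. goodL \<alpha> X P \<and> hd P = S \<and> Jp (Suc m) S P" using hdQ JpQ by blast
    qed
  qed
  have FC: "F \<in> C" using F facetD by simp
  have fa: "finite \<alpha>" using face_fin[OF a] .
  have cF: "card F = Suc d" using fcard[OF F(1)] .
  have "card \<alpha> < card F" using cF cd by linarith
  then have "\<not> F \<subseteq> \<alpha>" using card_mono[OF fa] by (meson not_le)
  then have ne: "lv ` (F - \<alpha>) \<noteq> {}" by simp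
  have fin: "finite (lv ` (F - \<alpha>))" using face_fin[OF FC] by simp
  define m0 where "m0 = Min (lv ` (F - \<alpha>))"
  have "m0 \<in> lv ` (F - \<alpha>)" unfolding m0_def using Min_in[OF fin ne] .
  then have ex: "\<exists>y\<in>F-\<alpha>. lv y = m0" by (simp add: image_iff eq_commute)
  have all: "\<forall>y\<in>F-\<alpha>. m0 \<le> lv y" unfolding m0_def using Min_le[OF fin] by simp
  have "\<exists>P. goodL \<alpha> X P \<and> hd P = F \<and> Jp m0 F P" using inner[of m0, rule_format, OF F(1) F(2) all[rule_format] ex] .
  then show ?thesis by blast
qed

end

context NF begin

lemma L_main:
  "\<alpha> \<in> C \<Longrightarrow> X \<subseteq> Vx \<alpha> \<Longrightarrow> X \<noteq> {} \<Longrightarrow> F \<in> facets C \<Longrightarrow> \<alpha> \<subseteq> F \<Longrightarrow> \<exists>P. goodL \<alpha> X P \<and> hd P = F"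
proof (induction "Suc d - card \<alpha>" arbitrary: \<alpha> X F rule: less_induct)
  case less
  have cb: "card \<alpha> \<le> Suc d" using bound less.prems(1) by simp
  consider "card \<alpha> + 2 \<le> Suc d" | "card \<alpha> = d" | "card \<alpha> = Suc d" using cb by linarith
  then show ?case
  proof cases
    case 1
    show ?thesis
    proof (rule L_step[OF _ less.prems(1) 1 less.prems(2,3,4,5)])
      fix \<alpha>' X' F' assume h: "\<alpha>' \<in> C" "card \<alpha> < card \<alpha>'" "X' \<subseteq> Vx \<alpha>'" "X' \<noteq> {}" "F' \<in> facets C" "\<alpha>' \<subseteq> F'"
      have "card \<alpha>' \<le> Suc d" using bound h(1) by simp
      then have "Suc d - card \<alpha>' < Suc d - card \<alpha>" using h(2) by linarith
      then show "\<exists>P. goodL \<alpha>' X' P \<and> hd P = F'" using less.hyps h by blast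
    qed
  next
    case 2
    then show ?thesis using L_base less.prems by blast
  next
    case 3
    obtain x where "x \<in> X" using less.prems by blast
    then have "x \<in> Vx \<alpha>" using less.prems by blast
    then have "Suc (card \<alpha>) \<le> Suc d" using Vx_card less.prems(1) by blast
    then show ?thesis using 3 by simp
  qed
qed

lemma T_main:
  "\<alpha> \<in> C \<Longrightarrow> F \<in> facets C \<Longrightarrow> \<alpha> \<subseteq> F \<Longrightarrow> G \<in> facets C \<Longrightarrow> \<alpha> \<subseteq> G \<Longrightarrow>
    \<exists>P. spath \<alpha> P \<and> hd P = F \<and> last P = G \<and> nonrev P"
proof (induction "Suc d - card \<alpha>" arbitrary: \<alpha> F rule: less_induct)
  case less
  note a = less.prems(1) and F = less.prems(2,3) and G = less.prems(4,5)
  show ?case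
  proof (cases "F = G")
    case True
    then show ?thesis using spath_single[OF F] nonrev_single by (intro exI[of _ "[F]"]) simp
  next
    case False
    have "\<not> G \<subseteq> F" using facet_max[OF G(1) facetD[OF F(1)]] False by auto
    then obtain v where v: "v \<in> G" "v \<notin> F" by blast
    have va: "v \<notin> \<alpha>" using v F(2) by auto
    have GC: "G \<in> C" using facetD G by simp
    have vV: "v \<in> Vx \<alpha>" using Vx_sub_facet[OF GC G(2)] v va by simp
    obtain P1 where P1: "goodL \<alpha> {v} P1" "hd P1 = F" using L_main[OF a _ _ F, of "{v}"] vV by blast
    have sp1: "spath \<alpha> P1" using P1 unfolding goodL_def by simp
    have ne1: "P1 \<noteq> []" using sp1 unfolding spath_def by simp
    have vl: "v \<in> last P1" using P1 unfolding goodL_def by simp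
    have lastf: "last P1 \<in> facets C" "\<alpha> \<subseteq> last P1" using sp1 ne1 unfolding spath_def by auto
    define \<alpha>' where "\<alpha>' = insert v \<alpha>"
    have a'C: "\<alpha>' \<in> C" using vV unfolding Vx_def \<alpha>'_def by simp
    have ca: "card \<alpha>' = Suc (card \<alpha>)" using face_fin[OF a] va unfolding \<alpha>'_def by simp
    have "card \<alpha>' \<le> Suc d" using bound a'C by simp
    then have lt: "Suc d - card \<alpha>' < Suc d - card \<alpha>" using ca by linarith
    have s1: "\<alpha>' \<subseteq> last P1" using lastf vl unfolding \<alpha>'_def by simp
    have s2: "\<alpha>' \<subseteq> G" using G v unfolding \<alpha>'_def by simp
    obtain P2 where P2: "spath \<alpha>' P2" "hd P2 = last P1" "last P2 = G" "nonrev P2"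
      using less.hyps[OF lt a'C lastf(1) s1 G(1) s2] by blast
    have ne2: "P2 \<noteq> []" using P2 unfolding spath_def by simp
    have lh: "last P1 = hd P2" using P2 by simp
    have aa: "\<alpha> \<subseteq> \<alpha>'" unfolding \<alpha>'_def by auto
    have spQ: "spath \<alpha> (P1 @ tl P2)" using spath_cat[OF sp1 spath_mono[OF P2(1) aa] lh] .
    have nQ: "nonrev (P1 @ tl P2)"
    proof (rule nonrev_cat[OF ne1 ne2 lh])
      show "nonrev P1" using P1 unfolding goodL_def by simp
      show "nonrev P2" using P2 by simp
    next
      fix y i k assume yi: "i < length P1" "y \<in> P1!i" and yk: "k < length P2" "y \<in> P2!k"
      show "y \<in> last P1"
      proof (cases "y = v")
        case True then show ?thesis using vl by simp
      next
        case False
        have Hk: "P2!k \<in> facets C" "\<alpha>' \<subseteq> P2!k" using spath_nth[OF P2(1) yk(1)] by auto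
        have "v \<in> P2!k" using Hk unfolding \<alpha>'_def by auto
        then have "adj y v" using adj_in_face[OF facetD[OF Hk(1)] yk(2)] False by simp
        moreover have "last P1 \<inter> {v} = {v}" using vl by auto
        ultimately have yN: "y \<in> Nb (last P1 \<inter> {v})" unfolding Nb_def by auto
        have mP: "monoW (Nb (last P1 \<inter> {v})) P1" using P1(1) unfolding goodL_def by blast
        have "i \<le> length P1 - 1" "length P1 - 1 < length P1" using yi ne1 by auto
        then have "y \<in> P1 ! (length P1 - 1)" using monoD[OF mP yN _ _ yi(2)] by simp
        then show ?thesis using ne1 by (simp add: last_conv_nth)
      qed
    qed
    show ?thesis using spQ nQ P1(2) P2(3) cat_last[OF ne1 ne2 lh] ne1
      by (intro exI[of _ "P1 @ tl P2"]) simp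
  qed
qed

lemma fin_vertices: "finite (vertices C)"
  unfolding vertices_def using finC face_fin by blast

lemma hirsch:
  assumes sp: "spath {} P" and nr: "nonrev P"
  shows "length P - 1 \<le> card (vertices C) - Suc d"
proof -
  define L where "L = length P - 1"
  have ne: "P \<noteq> []" using sp unfolding spath_def by simp
  have Lt: "L < length P" using ne unfolding L_def by simp
  define G where "G = P ! L"
  have Pf: "\<And>i. i < length P \<Longrightarrow> P!i \<in> facets C" using spath_nth[OF sp] by blast
  have ex: "\<And>i. i < L \<Longrightarrow> \<exists>y. y \<in> P!i \<and> y \<notin> P!Suc i"
  proof -
    fix i assume i: "i < L"
    then have si: "Suc i < length P" unfolding L_def by simp
    have ra: "ridge_adj (P!i) (P!Suc i)" using sp si unfolding spath_def by blast
    have fin: "finite (P!i)" using face_fin facetD Pf si by simp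
    show "\<exists>y. y \<in> P!i \<and> y \<notin> P!Suc i"
    proof (rule ccontr)
      assume "\<not> (\<exists>y. y \<in> P!i \<and> y \<notin> P!Suc i)"
      then have "P!i \<inter> P!Suc i = P!i" by auto
      then show False using ra unfolding ridge_adj_def by simp
    qed
  qed
  define u where "u i = (SOME y. y \<in> P!i \<and> y \<notin> P!Suc i)" for i
  have u: "\<And>i. i < L \<Longrightarrow> u i \<in> P!i \<and> u i \<notin> P!Suc i"
    unfolding u_def using ex by (rule someI_ex)
  have uG: "\<And>i. i < L \<Longrightarrow> u i \<notin> G"
  proof
    fix i assume i: "i < L" "u i \<in> G"
    then have "u i \<in> P ! Suc i" using nonrevD[OF nr, of i "Suc i" L "u i"] u[OF i(1)] Lt unfolding G_def by simp
    then show False using u[OF i(1)] by simp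
  qed
  have inj: "inj_on u {..<L}"
  proof (rule inj_onI)
    fix i j assume ij: "i \<in> {..<L}" "j \<in> {..<L}" "u i = u j"
    show "i = j"
    proof (rule ccontr)
      assume "i \<noteq> j"
      then consider "i < j" | "j < i" by linarith
      then show False
      proof cases
        case 1
        have a1: "u i \<in> P!i" "u i \<in> P!j" using u[of i] u[of j] ij by auto
        have "j < length P" using ij Lt by simp
        then have "u i \<in> P ! Suc i" using nonrevD[OF nr, of i "Suc i" j "u i"] a1 1 by simp
        then show False using u[of i] ij by simp
      next
        case 2
        have a1: "u j \<in> P!j" "u j \<in> P!i" using u[of i] u[of j] ij by auto
        have "i < length P" using ij Lt by simp
        then have "u j \<in> P ! Suc j" using nonrevD[OF nr, of j "Suc j" i "u j"] a1 2 by simp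
        then show False using u[of j] ij by simp
      qed
    qed
  qed
  have sub: "u ` {..<L} \<subseteq> vertices C - G"
  proof
    fix y assume "y \<in> u ` {..<L}"
    then obtain i where i: "i < L" "y = u i" by auto
    then have "y \<in> P!i" using u by simp
    moreover have "P!i \<in> C" using Pf facetD i Lt by simp
    ultimately have "y \<in> vertices C" using in_vertices by blast
    then show "y \<in> vertices C - G" using uG i by simp
  qed
  have GC: "G \<in> C" using Pf facetD Lt unfolding G_def by simp
  have Gv: "G \<subseteq> vertices C" using in_vertices[OF GC] by blast
  have cG: "card G = Suc d" using fcard Pf Lt unfolding G_def by simp
  have "L = card (u ` {..<L})" using card_image[OF inj] by simp
  also have "\<dots> \<le> card (vertices C - G)" using card_mono[OF _ sub] fin_vertices by simp
  also have "\<dots> = card (vertices C) - Suc d" using card_Diff_subset[OF face_fin[OF GC] Gv] cG by simp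
  finally show ?thesis unfolding L_def .
qed

end

lemma face_in_facet0:
  assumes fin: "finite C" and s: "\<sigma> \<in> C" shows "\<exists>F\<in>facets C. \<sigma> \<subseteq> F"
proof -
  have "finite {\<tau>\<in>C. \<sigma> \<subseteq> \<tau>}" using fin by simp
  moreover have "{\<tau>\<in>C. \<sigma> \<subseteq> \<tau>} \<noteq> {}" using s by blast
  ultimately obtain F where F: "F \<in> {\<tau>\<in>C. \<sigma> \<subseteq> \<tau>}" "\<forall>b\<in>{\<tau>\<in>C. \<sigma> \<subseteq> \<tau>}. F \<le> b \<longrightarrow> F = b"
    using finite_has_maximal[of "{\<tau>\<in>C. \<sigma> \<subseteq> \<tau>}"] by blast
  then have "F \<in> facets C" unfolding facets_def by auto
  then show ?thesis using F by blast
qed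

theorem theorem1p1:
  fixes C :: "'a set set" and d n :: nat
  assumes "simplicial_complex C"
    and "finite C"
    and "has_dim C d"
    and "card (vertices C) = n"
    and "normal C"
    and "flag C"
  shows "non_revisiting_path_property C \<and> diam C \<le> n - d - 1"
proof -
  note sc = assms(1) and finC = assms(2)
  obtain \<sigma>0 where s0: "\<sigma>0 \<in> C" "card \<sigma>0 = d + 1" using assms(3) unfolding has_dim_def by blast
  have bnd: "\<And>\<sigma>. \<sigma> \<in> C \<Longrightarrow> card \<sigma> \<le> Suc d" using assms(3) unfolding has_dim_def by simp
  obtain F0 where F0: "F0 \<in> facets C" "\<sigma>0 \<subseteq> F0" using face_in_facet0[OF finC s0(1)] by blast
  have F0C: "F0 \<in> C" using F0 unfolding facets_def by simp
  have finF0: "finite F0" using sc F0C unfolding simplicial_complex_def by blast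
  have "card \<sigma>0 \<le> card F0" using card_mono[OF finF0 F0(2)] .
  then have cF0: "card F0 = Suc d" using bnd[OF F0C] s0 by simp
  have pure: "pure C" using assms(5) unfolding normal_def by simp
  have fcard: "\<And>F. F \<in> facets C \<Longrightarrow> card F = Suc d"
    using pure F0(1) cF0 unfolding pure_def by metis
  have norm: "\<And>\<sigma>. \<sigma> \<in> C \<Longrightarrow> dual_connected (St \<sigma> C)" using assms(5) unfolding normal_def by simp
  interpret NF C d using sc finC fcard bnd norm assms(6) by unfold_locales auto
  have e: "{} \<in> C" using sc unfolding simplicial_complex_def by simp
  have stv: "\<And>H v. H \<in> facets C \<Longrightarrow> H \<in> St {v} C \<longleftrightarrow> v \<in> H"
  proof -
    fix H v assume H: "H \<in> facets C"
    show "H \<in> St {v} C \<longleftrightarrow> v \<in> H"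
    proof
      assume "H \<in> St {v} C"
      then obtain \<rho> where "\<rho> \<in> C" "{v} \<subseteq> \<rho>" "H \<subseteq> \<rho>" unfolding St_def by blast
      then show "v \<in> H" using facet_max[OF H] by blast
    next
      assume "v \<in> H"
      then show "H \<in> St {v} C" unfolding St_def using facetD[OF H] by blast
    qed
  qed
  have paths: "\<And>F G. F \<in> facets C \<Longrightarrow> G \<in> facets C \<Longrightarrow>
      \<exists>xs. path_between C xs F G \<and> non_revisiting C xs \<and> length xs - 1 \<le> n - d - 1"
  proof -
    fix F G assume F: "F \<in> facets C" and G: "G \<in> facets C"
    obtain P where P: "spath {} P" "hd P = F" "last P = G" "nonrev P" using T_main[OF e F _ G] by blast
    have pb: "path_between C P F G" using P unfolding path_between_def facet_path_def spath_def by auto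
    have nr: "non_revisiting C P" unfolding non_revisiting_def
    proof (intro ballI allI impI)
      fix v i j k assume h: "i \<le> k \<and> k \<le> j \<and> j < length P \<and> P ! i \<in> St {v} C \<and> P ! j \<in> St {v} C"
      have "v \<in> P!i" "v \<in> P!j" using h stv spath_nth[OF P(1)] by auto
      then have "v \<in> P!k" using nonrevD[OF P(4), of i k j v] h by simp
      then show "P ! k \<in> St {v} C" using stv spath_nth[OF P(1)] h by auto
    qed
    have "length P - 1 \<le> card (vertices C) - Suc d" using hirsch[OF P(1,4)] .
    then show "\<exists>xs. path_between C xs F G \<and> non_revisiting C xs \<and> length xs - 1 \<le> n - d - 1"
      using pb nr assms(4) by (intro exI[of _ P]) simp
  qed
  have nrp: "non_revisiting_path_property C"
    unfolding non_revisiting_path_property_def using paths by blast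
  have fd: "\<And>F G. F \<in> facets C \<Longrightarrow> G \<in> facets C \<Longrightarrow> facet_dist C F G \<le> n - d - 1"
  proof -
    fix F G assume F: "F \<in> facets C" and G: "G \<in> facets C"
    obtain xs where xs: "path_between C xs F G" "length xs - 1 \<le> n - d - 1" using paths[OF F G] by blast
    have "xs \<noteq> []" using xs unfolding path_between_def facet_path_def by simp
    then have "length xs = (length xs - 1) + 1" by simp
    then have "facet_dist C F G \<le> length xs - 1" unfolding facet_dist_def
      using xs(1) by (intro Least_le) blast
    then show "facet_dist C F G \<le> n - d - 1" using xs(2) by simp
  qed
  define S where "S = {facet_dist C F G | F G. F \<in> facets C \<and> G \<in> facets C}"
  have Seq: "S = (\<lambda>(F, G). facet_dist C F G) ` (facets C \<times> facets C)" unfolding S_def by auto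
  have finf: "finite (facets C)" using finC unfolding facets_def by simp
  have finS: "finite S" unfolding Seq using finf by simp
  have neS: "S \<noteq> {}" unfolding Seq using F0(1) by auto
  have "\<forall>a\<in>S. a \<le> n - d - 1" unfolding S_def using fd by blast
  then have "Max S \<le> n - d - 1" using Max_le_iff[OF finS neS] by blast
  then have "diam C \<le> n - d - 1" unfolding diam_def S_def .
  then show ?thesis using nrp by simp
qed

end
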